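(* Let $\Gamma$ be a countable discrete abelian group and $(S_n)_{n\ge1}$ a sequence of subgroups of $\Gamma$. A sequence $(\chi_n)_n$ in $\widehat\Gamma$ converges to $\chi\in\widehat\Gamma$ along $(S_n)_n$ if and only if there exist characters $\nu_n\in S_n^\perp$ such that $\chi_n\nu_n\to\chi$ in $\widehat\Gamma$.
   Context: A sequence $(\chi_n)$ in $\widehat\Gamma$ converges to $\chi$ along $(S_n)$ if $\lim_n\mathds{1}_{S_n}(\gamma)|\chi_n(\gamma)-\chi(\gamma)|=0$ for all $\gamma\in\Gamma$. $S^\perp=\{\nu\in\widehat\Gamma:\nu|_S=1\}$; $\widehat\Gamma$ carries the topology of pointwise convergence. *)

theory Defs
  imports "HOL-Analysis.Analysis"
begin

definition is_character :: "('g::ab_group_add \<Rightarrow> complex) \<Rightarrow> bool" where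
  "is_character chi \<longleftrightarrow> (\<forall>a b. chi (a + b) = chi a * chi b) \<and> (\<forall>a. norm (chi a) = 1)"

definition is_subgroup :: "'g::ab_group_add set \<Rightarrow> bool" where
  "is_subgroup S \<longleftrightarrow> 0 \<in> S \<and> (\<forall>a\<in>S. \<forall>b\<in>S. a + b \<in> S) \<and> (\<forall>a\<in>S. - a \<in> S)"

definition annihilator :: "'g::ab_group_add set \<Rightarrow> ('g \<Rightarrow> complex) set" where
  "annihilator S = {\<nu>. is_character \<nu> \<and> (\<forall>s\<in>S. \<nu> s = 1)}"

definition conv_along :: "(nat \<Rightarrow> 'g::ab_group_add set) \<Rightarrow> (nat \<Rightarrow> 'g \<Rightarrow> complex) \<Rightarrow> ('g \<Rightarrow> complex) \<Rightarrow> bool" where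
  "conv_along S chis chi \<longleftrightarrow>
     (\<forall>\<gamma>. (\<lambda>n. indicator (S n) \<gamma> * cmod (chis n \<gamma> - chi \<gamma>)) \<longlonglongrightarrow> (0::real))"

end

theory Submission
  imports Defs "HOL-Library.FuncSet" "HOL-Library.Real_Mod"
begin


definition pchar :: "'g::ab_group_add set \<Rightarrow> ('g \<Rightarrow> complex) \<Rightarrow> bool" where
  "pchar H psi \<longleftrightarrow> (\<forall>a\<in>H. \<forall>b\<in>H. psi (a + b) = psi a * psi b) \<and> (\<forall>a\<in>H. norm (psi a) = 1)"

definition mul :: "nat \<Rightarrow> 'g::ab_group_add \<Rightarrow> 'g" where
  "mul n x = (\<Sum>i<n. x)"

definition zmul :: "int \<Rightarrow> 'g::ab_group_add \<Rightarrow> 'g" where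
  "zmul j x = (if 0 \<le> j then mul (nat j) x else - mul (nat (-j)) x)"

lemma mul_0[simp]: "mul 0 x = 0" by (simp add: mul_def)
lemma mul_Suc: "mul (Suc n) x = mul n x + x" by (simp add: mul_def)
lemma mul_add: "mul (m + n) x = mul m x + mul n x"
  by (induction n) (simp_all add: mul_Suc add.assoc)

lemma zmul_succ: "zmul (j + 1) x = zmul j x + x"
proof (cases "0 \<le> j")
  case True
  then have "nat (j+1) = Suc (nat j)" by simp
  then show ?thesis using True by (simp add: zmul_def mul_Suc)
next
  case False
  show ?thesis
  proof (cases "j = -1")
    case True then show ?thesis by (simp add: zmul_def mul_def)
  next
    case False2: False
    with False have "nat (-j) = Suc (nat (-(j+1)))" by simp
    then show ?thesis using False False2 by (simp add: zmul_def mul_Suc)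
  qed
qed

lemma zmul_0[simp]: "zmul 0 x = 0" by (simp add: zmul_def)
lemma zmul_1[simp]: "zmul 1 x = x" by (simp add: zmul_def mul_def)

lemma zmul_add: "zmul (a + b) x = zmul a x + zmul b x"
proof (induction b rule: int_induct[where k=0])
  case base then show ?case by simp
next
  case (step1 i)
  have "zmul (a + (i + 1)) x = zmul ((a + i) + 1) x" by (simp add: add.assoc)
  also have "\<dots> = zmul (a+i) x + x" by (rule zmul_succ)
  finally show ?case using step1 by (simp add: zmul_succ add.assoc)
next
  case (step2 i)
  have e1: "zmul (a + i) x = zmul (a + (i - 1)) x + x" using zmul_succ[of "a + (i - 1)" x] by simp
  have e2: "zmul i x = zmul (i - 1) x + x" using zmul_succ[of "i - 1" x] by simp
  have "zmul (a+(i-1)) x = zmul (a+i) x - x" using e1 by simp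
  moreover have "zmul (i-1) x = zmul i x - x" using e2 by simp
  ultimately show ?case using step2 by simp
qed

lemma zmul_neg: "zmul (- a) x = - zmul a x"
  using zmul_add[of a "-a" x] by (simp add: eq_neg_iff_add_eq_0 add.commute)

lemma zmul_diff: "zmul (a - b) x = zmul a x - zmul b x"
  using zmul_add[of a "-b" x] zmul_neg[of b x] by simp

lemma zmul_mult: "zmul (a * b) x = zmul a (zmul b x)"
proof (induction a rule: int_induct[where k=0])
  case base then show ?case by simp
next
  case (step1 i)
  then show ?case by (simp add: distrib_right zmul_add zmul_succ)
next
  case (step2 i)
  have "zmul ((i - 1) * b) x = zmul (i * b) x - zmul b x" by (simp add: left_diff_distrib zmul_diff)
  moreover have "zmul (i - 1) (zmul b x) = zmul i (zmul b x) - zmul b x" by (simp add: zmul_diff)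
  ultimately show ?case using step2 by simp
qed

lemma zmul_add_right: "zmul j (x + y) = zmul j x + zmul j y"
proof (induction j rule: int_induct[where k=0])
  case base then show ?case by simp
next
  case (step1 i)
  have "zmul (i+1) (x+y) = zmul i (x+y) + (x+y)" "zmul (i+1) x = zmul i x + x" "zmul (i+1) y = zmul i y + y"
    using zmul_succ by blast+
  then show ?case using step1 by (simp add: algebra_simps)
next
  case (step2 i)
  have "zmul i (x+y) = zmul (i - 1) (x+y) + (x+y)" using zmul_succ[of "i - 1"] by simp
  moreover have "zmul i x = zmul (i - 1) x + x" "zmul i y = zmul (i - 1) y + y"
    using zmul_succ[of "i - 1"] by simp_all
  ultimately show ?case using step2 by (simp add: algebra_simps)
qed

lemma subgroup_mul: "is_subgroup S \<Longrightarrow> x \<in> S \<Longrightarrow> mul n x \<in> S"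
  by (induction n) (auto simp: mul_Suc is_subgroup_def)

lemma subgroup_zmul: "is_subgroup S \<Longrightarrow> x \<in> S \<Longrightarrow> zmul j x \<in> S"
  using subgroup_mul by (auto simp: zmul_def is_subgroup_def)

lemma subgroup_diff: "is_subgroup S \<Longrightarrow> x \<in> S \<Longrightarrow> y \<in> S \<Longrightarrow> x - y \<in> S"
  unfolding is_subgroup_def by (metis diff_conv_add_uminus)

lemma pchar_zero: "is_subgroup H \<Longrightarrow> pchar H psi \<Longrightarrow> psi 0 = 1"
proof -
  assume H: "is_subgroup H" and p: "pchar H psi"
  then have "0 \<in> H" by (simp add: is_subgroup_def)
  with p have "psi 0 = psi 0 * psi 0" "norm (psi 0) = 1" by (auto simp: pchar_def dest: bspec[of _ _ 0])
  then show ?thesis by (metis mult_cancel_right1 norm_zero zero_neq_one)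
qed

lemma pchar_zmul: "is_subgroup H \<Longrightarrow> pchar H psi \<Longrightarrow> x \<in> H \<Longrightarrow> psi (zmul j x) = psi x powi j"
proof (induction j rule: int_induct[where k=0])
  case base then show ?case by (simp add: pchar_zero)
next
  case (step1 i)
  have nz: "psi x \<noteq> 0" using step1 by (auto simp: pchar_def)
  have "zmul i x \<in> H" using step1 subgroup_zmul by blast
  then have "psi (zmul (i+1) x) = psi (zmul i x) * psi x"
    using step1 by (auto simp: zmul_succ pchar_def)
  then show ?case using step1 nz by (simp add: power_int_add)
next
  case (step2 i)
  have nz: "psi x \<noteq> 0" using step2 by (auto simp: pchar_def)
  have "zmul (i - 1) x \<in> H" using step2 subgroup_zmul by blast
  then have "psi (zmul i x) = psi (zmul (i - 1) x) * psi x"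
    using step2 zmul_succ[of "i - 1" x] by (auto simp: pchar_def)
  then have "psi (zmul (i - 1) x) = psi (zmul i x) / psi x" using nz by simp
  then show ?case using step2 nz by (simp add: power_int_diff)
qed


definition spanH :: "'g::ab_group_add set \<Rightarrow> 'g \<Rightarrow> 'g set" where
  "spanH H g = {h + zmul j g | h j. h \<in> H}"

lemma spanH_subgroup:
  assumes "is_subgroup H" shows "is_subgroup (spanH H g)"
  unfolding is_subgroup_def
proof (intro conjI ballI)
  show "0 \<in> spanH H g" using assms unfolding spanH_def is_subgroup_def by (auto intro!: exI[of _ 0])
next
  fix a b assume "a \<in> spanH H g" "b \<in> spanH H g"
  then obtain h1 j1 h2 j2 where "a = h1 + zmul j1 g" "b = h2 + zmul j2 g" "h1 \<in> H" "h2 \<in> H"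
    unfolding spanH_def by blast
  then have "a + b = (h1 + h2) + zmul (j1 + j2) g" "h1 + h2 \<in> H"
    using assms by (auto simp: zmul_add algebra_simps is_subgroup_def)
  then show "a + b \<in> spanH H g" unfolding spanH_def by blast
next
  fix a assume "a \<in> spanH H g"
  then obtain h1 j1 where "a = h1 + zmul j1 g" "h1 \<in> H"
    unfolding spanH_def by blast
  then have "- a = (- h1) + zmul (- j1) g" "- h1 \<in> H"
    using assms by (auto simp: zmul_neg algebra_simps is_subgroup_def)
  then show "- a \<in> spanH H g" unfolding spanH_def by blast
qed

lemma spanH_sup: "H \<subseteq> spanH H g"
proof
  fix x assume "x \<in> H"
  moreover have "x = x + zmul 0 g" by simp
  ultimately show "x \<in> spanH H g" unfolding spanH_def by blast
qed

lemma spanH_g: "is_subgroup H \<Longrightarrow> g \<in> spanH H g"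
  unfolding spanH_def is_subgroup_def by (auto intro!: exI[of _ 0] exI[of _ 1])

lemma ext1:
  assumes H: "is_subgroup H" and p: "pchar H psi" and z: "norm z = 1"
    and zc: "\<And>j. zmul j g \<in> H \<Longrightarrow> z powi j = psi (zmul j g)"
  shows "\<exists>psi'. pchar (spanH H g) psi' \<and> (\<forall>h\<in>H. psi' h = psi h) \<and> psi' g = z"
proof -
  have z0: "z \<noteq> 0" using z by auto
  have wd: "psi h * z powi j = psi h' * z powi j'"
    if "h \<in> H" "h' \<in> H" "h + zmul j g = h' + zmul j' g" for h h' j j'
  proof -
    have e: "zmul (j - j') g = h' - h" using that(3) by (simp add: zmul_diff algebra_simps)
    then have inH: "zmul (j - j') g \<in> H" using H that subgroup_diff by metis
    have "h' = h + zmul (j - j') g" using e by (simp add: algebra_simps)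
    then have "psi h' = psi h * psi (zmul (j - j') g)" using p that inH by (simp add: pchar_def)
    also have "\<dots> = psi h * z powi (j - j')" using zc inH by simp
    finally show ?thesis using z0 by (simp add: power_int_diff)
  qed
  define psi' where "psi' y = (SOME v. \<exists>h j. h \<in> H \<and> y = h + zmul j g \<and> v = psi h * z powi j)" for y
  have val: "psi' (h + zmul j g) = psi h * z powi j" if "h \<in> H" for h j
  proof -
    have "\<exists>h' j'. h' \<in> H \<and> h + zmul j g = h' + zmul j' g \<and> psi h * z powi j = psi h' * z powi j'"
      using that by blast
    then have ex: "\<exists>v. \<exists>h' j'. h' \<in> H \<and> h + zmul j g = h' + zmul j' g \<and> v = psi h' * z powi j'" by blast
    show ?thesis unfolding psi'_def
      by (rule someI2_ex[OF ex]) (use wd that in metis)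
  qed
  have "pchar (spanH H g) psi'"
    unfolding pchar_def
  proof (intro conjI ballI)
    fix a b assume "a \<in> spanH H g" "b \<in> spanH H g"
    then obtain h1 j1 h2 j2 where ab: "a = h1 + zmul j1 g" "b = h2 + zmul j2 g" "h1 \<in> H" "h2 \<in> H"
      unfolding spanH_def by blast
    then have "a + b = (h1 + h2) + zmul (j1 + j2) g" "h1 + h2 \<in> H"
      using H by (auto simp: zmul_add algebra_simps is_subgroup_def)
    then have "psi' (a + b) = psi (h1 + h2) * z powi (j1 + j2)" using val by simp
    also have "\<dots> = (psi h1 * z powi j1) * (psi h2 * z powi j2)"
      using p ab z0 by (simp add: pchar_def power_int_add)
    finally show "psi' (a + b) = psi' a * psi' b" using ab val by simp
  next
    fix a assume "a \<in> spanH H g"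
    then obtain h1 j1 where ab: "a = h1 + zmul j1 g" "h1 \<in> H"
      unfolding spanH_def by blast
    then show "norm (psi' a) = 1" using val p z by (simp add: pchar_def norm_mult norm_power_int)
  qed
  moreover have "\<forall>h\<in>H. psi' h = psi h" using val[of _ 0] by simp
  moreover have "psi' g = z" using val[of 0 1] H pchar_zero[OF H p] by (simp add: is_subgroup_def)
  ultimately show ?thesis by blast
qed

lemma D_struct:
  assumes H: "is_subgroup H"
  shows "(\<forall>j. zmul j g \<in> H \<longrightarrow> j = 0) \<or>
         (\<exists>d::nat. d > 0 \<and> zmul (int d) g \<in> H \<and> (\<forall>j. zmul j g \<in> H \<longrightarrow> int d dvd j))"
proof (cases "\<forall>j. zmul j g \<in> H \<longrightarrow> j = 0")
  case True then show ?thesis by blast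
next
  case False
  then obtain j where j: "zmul j g \<in> H" "j \<noteq> 0" by blast
  have "zmul \<bar>j\<bar> g \<in> H"
    using j H by (cases "j \<ge> 0") (auto simp: zmul_neg is_subgroup_def)
  then have ex: "\<exists>n::nat. n > 0 \<and> zmul (int n) g \<in> H" using j by (intro exI[of _ "nat \<bar>j\<bar>"]) auto
  define d where "d = (LEAST n::nat. n > 0 \<and> zmul (int n) g \<in> H)"
  have d: "d > 0" "zmul (int d) g \<in> H" using LeastI_ex[OF ex] unfolding d_def by auto
  have "int d dvd i" if i: "zmul i g \<in> H" for i
  proof (rule ccontr)
    assume nd: "\<not> int d dvd i"
    have r: "i mod int d = i - int d * (i div int d)" using div_mult_mod_eq[of i "int d"] by (simp add: algebra_simps)
    have m: "zmul (int d * (i div int d)) g = zmul (i div int d) (zmul (int d) g)"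
      by (metis mult.commute zmul_mult)
    have "zmul (i mod int d) g = zmul i g - zmul (i div int d) (zmul (int d) g)"
      by (simp add: r zmul_diff m)
    then have "zmul (i mod int d) g \<in> H"
      using subgroup_diff[OF H i subgroup_zmul[OF H d(2)]] by simp
    then have inH: "zmul (int (nat (i mod int d))) g \<in> H"
      using d(1) by simp
    have pos: "nat (i mod int d) > 0" using nd d(1) by (simp add: dvd_eq_mod_eq_0 order_le_neq_trans)
    have "d \<le> nat (i mod int d)"
      using Least_le[of "\<lambda>n::nat. 0 < n \<and> zmul (int n) g \<in> H", OF conjI[OF pos inH]]
      unfolding d_def by simp
    moreover have "nat (i mod int d) < d" using d(1) by (simp add: nat_less_iff)
    ultimately show False by simp
  qed
  then show ?thesis using d by blast
qed

lemma zexists: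
  assumes H: "is_subgroup H" and p: "pchar H psi"
  shows "\<exists>z. norm z = 1 \<and> (\<forall>j. zmul j g \<in> H \<longrightarrow> z powi j = psi (zmul j g))"
  using D_struct[OF H, of g]
proof
  assume "\<forall>j. zmul j g \<in> H \<longrightarrow> j = 0"
  then show ?thesis using pchar_zero[OF H p] by (intro exI[of _ 1]) auto
next
  assume "\<exists>d::nat. d > 0 \<and> zmul (int d) g \<in> H \<and> (\<forall>j. zmul j g \<in> H \<longrightarrow> int d dvd j)"
  then obtain d::nat where d: "d > 0" "zmul (int d) g \<in> H" "\<And>j. zmul j g \<in> H \<Longrightarrow> int d dvd j" by blast
  define w where "w = psi (zmul (int d) g)"
  have w1: "norm w = 1" using p d unfolding w_def pchar_def by blast
  define z where "z = cis (Arg w / real d)"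
  have "z ^ d = cis (Arg w)" unfolding z_def Complex.DeMoivre using d by simp
  also have "\<dots> = w" using w1 by (subst cis_Arg) (auto simp: sgn_eq)
  finally have zd: "z ^ d = w" .
  have "z powi j = psi (zmul j g)" if j: "zmul j g \<in> H" for j
  proof -
    obtain q where q: "j = int d * q" using d(3)[OF j] by blast
    have "z powi j = (z powi int d) powi q" unfolding q by (rule power_int_mult)
    also have "\<dots> = w powi q" using zd by simp
    also have "\<dots> = psi (zmul q (zmul (int d) g))" unfolding w_def using pchar_zmul[OF H p d(2)] by simp
    also have "\<dots> = psi (zmul j g)" by (simp add: q zmul_mult mult.commute)
    finally show ?thesis .
  qed
  moreover have "norm z = 1" unfolding z_def by simp
  ultimately show ?thesis by blast
qed

lemma zsep:
  assumes H: "is_subgroup H" and g: "g \<notin> H"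
  shows "\<exists>z::complex. norm z = 1 \<and> z \<noteq> 1 \<and> (\<forall>j. zmul j g \<in> H \<longrightarrow> z powi j = 1)"
  using D_struct[OF H, of g]
proof
  assume a: "\<forall>j. zmul j g \<in> H \<longrightarrow> j = 0"
  have "norm (-1::complex) = 1 \<and> (-1::complex) \<noteq> 1 \<and> (\<forall>j. zmul j g \<in> H \<longrightarrow> (-1::complex) powi j = 1)"
    using a by auto
  then show ?thesis by blast
next
  assume "\<exists>d::nat. d > 0 \<and> zmul (int d) g \<in> H \<and> (\<forall>j. zmul j g \<in> H \<longrightarrow> int d dvd j)"
  then obtain d::nat where d: "d > 0" "zmul (int d) g \<in> H" "\<And>j. zmul j g \<in> H \<Longrightarrow> int d dvd j" by blast
  have "d \<noteq> 1" using d(2) g by auto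
  with d have d2: "d \<ge> 2" by simp
  define z where "z = cis (2 * pi / real d)"
  have zd: "z ^ d = 1" unfolding z_def Complex.DeMoivre using d by simp
  have "z \<noteq> 1"
  proof
    assume "z = 1"
    then have c1: "cos (2 * pi / real d) = 1" unfolding z_def using cis.sel(1)[of "2 * pi / real d"] by simp
    have "0 < 2 * pi / real d" using d2 by simp
    moreover have "2 * pi / real d \<le> pi" using d2 by (simp add: field_simps)
    ultimately have "cos (2 * pi / real d) < cos 0" by (intro cos_monotone_0_pi) auto
    then show False using c1 by simp
  qed
  moreover have "z powi j = 1" if j: "zmul j g \<in> H" for j
  proof -
    obtain q where q: "j = int d * q" using d(3)[OF j] by blast
    have "z powi j = (z powi int d) powi q" unfolding q by (rule power_int_mult)
    then show ?thesis using zd by simp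
  qed
  moreover have "norm z = 1" unfolding z_def by simp
  ultimately show ?thesis by blast
qed


lemma ext_step_exists:
  assumes "is_subgroup H" "pchar H psi"
  shows "\<exists>psi'. pchar (spanH H g) psi' \<and> (\<forall>h\<in>H. psi' h = psi h)"
proof -
  obtain z where "norm z = 1" "\<And>j. zmul j g \<in> H \<Longrightarrow> z powi j = psi (zmul j g)"
    using zexists[OF assms, of g] by blast
  from ext1[OF assms this] show ?thesis by blast
qed

lemma extend_char:
  fixes H :: "'g::{ab_group_add,countable} set"
  assumes H: "is_subgroup H" and p: "pchar H psi"
  shows "\<exists>chi. is_character chi \<and> (\<forall>h\<in>H. chi h = psi h)"
proof -
  define stp :: "'g set \<times> ('g \<Rightarrow> complex) \<Rightarrow> 'g \<Rightarrow> 'g set \<times> ('g \<Rightarrow> complex)" where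
    "stp P g = (spanH (fst P) g, SOME psi'. pchar (spanH (fst P) g) psi' \<and> (\<forall>h\<in>fst P. psi' h = snd P h))"
    for P g
  define C where "C = rec_nat (H, psi) (\<lambda>k P. stp P (from_nat k))"
  have C0: "C 0 = (H, psi)" and CS: "C (Suc k) = stp (C k) (from_nat k)" for k
    unfolding C_def by simp_all
  have inv: "is_subgroup (fst (C k)) \<and> pchar (fst (C k)) (snd (C k))" for k
  proof (induction k)
    case 0 then show ?case using H p C0 by simp
  next
    case (Suc k)
    then have ex: "\<exists>psi'. pchar (spanH (fst (C k)) (from_nat k)) psi' \<and> (\<forall>h\<in>fst (C k). psi' h = snd (C k) h)"
      using ext_step_exists by blast
    show ?case unfolding CS stp_def using someI_ex[OF ex] spanH_subgroup[of "fst (C k)"] Suc by simp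
  qed
  have stepC: "fst (C k) \<subseteq> fst (C (Suc k)) \<and> (\<forall>h\<in>fst (C k). snd (C (Suc k)) h = snd (C k) h)
     \<and> from_nat k \<in> fst (C (Suc k))" for k
  proof -
    have ex: "\<exists>psi'. pchar (spanH (fst (C k)) (from_nat k)) psi' \<and> (\<forall>h\<in>fst (C k). psi' h = snd (C k) h)"
      using ext_step_exists inv by blast
    show ?thesis unfolding CS stp_def
      using someI_ex[OF ex] spanH_sup[of "fst (C k)" "from_nat k"] spanH_g[of "fst (C k)" "from_nat k"] conjunct1[OF inv[of k]] by simp
  qed
  have mono: "fst (C k) \<subseteq> fst (C m) \<and> (\<forall>h\<in>fst (C k). snd (C m) h = snd (C k) h)" if "k \<le> m" for k m
    using that
  proof (induction m rule: dec_induct)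
    case base then show ?case by simp
  next
    case (step m)
    have a: "fst (C m) \<subseteq> fst (C (Suc m))" "\<forall>h\<in>fst (C m). snd (C (Suc m)) h = snd (C m) h"
      using stepC[of m] by blast+
    show ?case
    proof
      show "fst (C k) \<subseteq> fst (C (Suc m))" using step.IH a(1) by blast
      show "\<forall>h\<in>fst (C k). snd (C (Suc m)) h = snd (C k) h"
      proof
        fix h assume h: "h \<in> fst (C k)"
        then have "h \<in> fst (C m)" using step.IH by blast
        then show "snd (C (Suc m)) h = snd (C k) h" using a(2) step.IH h by simp
      qed
    qed
  qed
  define chi where "chi x = snd (C (Suc (to_nat x))) x" for x
  have inC: "x \<in> fst (C (Suc (to_nat x)))" for x
    using stepC[of "to_nat x"] by simp
  have chiC: "x \<in> fst (C m) \<and> chi x = snd (C m) x" if "Suc (to_nat x) \<le> m" for x m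
  proof -
    have "fst (C (Suc (to_nat x))) \<subseteq> fst (C m)"
      "\<forall>h\<in>fst (C (Suc (to_nat x))). snd (C m) h = snd (C (Suc (to_nat x))) h"
      using mono[OF that] by blast+
    then show ?thesis using inC[of x] unfolding chi_def by (simp add: subsetD)
  qed
  have "is_character chi"
    unfolding is_character_def
  proof (intro conjI allI)
    fix a b :: 'g
    define m where "m = Suc (max (to_nat a) (max (to_nat b) (to_nat (a+b))))"
    have "a \<in> fst (C m) \<and> chi a = snd (C m) a" "b \<in> fst (C m) \<and> chi b = snd (C m) b"
      "a + b \<in> fst (C m) \<and> chi (a + b) = snd (C m) (a + b)"
      by (rule chiC; simp add: m_def)+
    then show "chi (a + b) = chi a * chi b" using inv[of m] by (simp add: pchar_def)
  next
    fix a :: 'g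
    show "norm (chi a) = 1" using inv[of "Suc (to_nat a)"] inC[of a] unfolding chi_def pchar_def by blast
  qed
  moreover have "\<forall>h\<in>H. chi h = psi h"
  proof
    fix h assume h: "h \<in> H"
    have "chi h = snd (C (Suc (to_nat h))) h" unfolding chi_def ..
    also have "\<dots> = snd (C 0) h" using mono[of 0 "Suc (to_nat h)"] h C0 by simp
    finally show "chi h = psi h" using C0 by simp
  qed
  ultimately show ?thesis by blast
qed

lemma separate:
  fixes S :: "'g::{ab_group_add,countable} set"
  assumes S: "is_subgroup S" and g: "g \<notin> S"
  shows "\<exists>mu. mu \<in> annihilator S \<and> mu g \<noteq> 1"
proof -
  obtain z :: complex where z: "norm z = 1" "z \<noteq> 1" "\<And>j. zmul j g \<in> S \<Longrightarrow> z powi j = 1"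
    using zsep[OF S g] by blast
  have p1: "pchar S (\<lambda>_. 1)" by (simp add: pchar_def)
  have "\<exists>psi'. pchar (spanH S g) psi' \<and> (\<forall>h\<in>S. psi' h = 1) \<and> psi' g = z"
    by (rule ext1[OF S p1 z(1)]) (rule z(3))
  then obtain psi' where psi': "pchar (spanH S g) psi'" "\<forall>h\<in>S. psi' h = 1" "psi' g = z"
    by blast
  obtain chi where chi: "is_character chi" "\<forall>h\<in>spanH S g. chi h = psi' h"
    using extend_char[OF spanH_subgroup[OF S] psi'(1)] by blast
  have "chi g = z" using chi(2) spanH_g[OF S] psi'(3) by simp
  moreover have "\<forall>s\<in>S. chi s = 1"
  proof
    fix s assume "s \<in> S"
    then show "chi s = 1" using chi(2) spanH_sup[of S g] psi'(2) by (simp add: subsetD)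
  qed
  ultimately have "chi \<in> annihilator S \<and> chi g \<noteq> 1" using chi(1) z(2) unfolding annihilator_def by simp
  then show ?thesis by blast
qed


lemma char_0: "is_character chi \<Longrightarrow> chi 0 = 1"
proof -
  assume c: "is_character chi"
  then have "chi 0 = chi 0 * chi 0" "norm (chi 0) = 1" unfolding is_character_def by (metis add_0)+
  then show ?thesis by (metis mult_cancel_right1 norm_zero zero_neq_one)
qed

lemma norm1_inverse: "norm (z::complex) = 1 \<Longrightarrow> z * cnj z = 1"
  by (metis complex_norm_square mult.commute of_real_1 power_one)

lemma char_neg: "is_character chi \<Longrightarrow> chi (- a) = cnj (chi a)"
proof -
  assume c: "is_character chi"
  then have "chi a * chi (- a) = 1" "norm (chi a) = 1" using char_0[OF c] unfolding is_character_def
    by (metis add.right_inverse)+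
  moreover have "chi a * cnj (chi a) = 1" using norm1_inverse calculation(2) by blast
  ultimately show ?thesis by (metis mult.left_commute mult_1_right)
qed

lemma char_diff: "is_character chi \<Longrightarrow> chi (a - b) = chi a * cnj (chi b)"
  using char_neg[of chi b] unfolding is_character_def by (metis diff_conv_add_uminus)

lemma char_sum: "is_character chi \<Longrightarrow> chi (\<Sum>i\<in>A. f i) = (\<Prod>i\<in>A. chi (f i))"
  by (induction A rule: infinite_finite_induct) (auto simp: char_0 is_character_def)

lemma char_mul: "is_character chi \<Longrightarrow> chi (mul n x) = chi x ^ n"
  unfolding mul_def by (simp add: char_sum)

lemma char_norm: "is_character chi \<Longrightarrow> norm (chi x) = 1"
  unfolding is_character_def by blast

lemma char_prod: "is_character chi \<Longrightarrow> is_character mu \<Longrightarrow> is_character (\<lambda>x. chi x * mu x)"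
  unfolding is_character_def by (simp add: norm_mult)

lemma char_pow: "is_character mu \<Longrightarrow> is_character (\<lambda>x. mu x ^ a)"
  unfolding is_character_def by (simp add: norm_power power_mult_distrib)

lemma char_cnj: "is_character mu \<Longrightarrow> is_character (\<lambda>x. cnj (mu x))"
  unfolding is_character_def by simp

lemma char_one: "is_character (\<lambda>_. 1)"
  unfolding is_character_def by simp

lemma ann_one: "(\<lambda>_. 1) \<in> annihilator S"
  unfolding annihilator_def using char_one by simp

lemma ann_prod_pow: "nu \<in> annihilator S \<Longrightarrow> mu \<in> annihilator S \<Longrightarrow> (\<lambda>y. nu y * mu y ^ a) \<in> annihilator S"
  unfolding annihilator_def using char_prod char_pow by auto

lemma avg_exists:
  fixes f :: "nat \<Rightarrow> real"
  assumes "N > 0"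
  shows "\<exists>a<N. (\<Sum>b<N. f b) / real N \<le> f a"
proof (rule ccontr)
  assume "\<not> ?thesis"
  then have "\<And>a. a < N \<Longrightarrow> f a < (\<Sum>b<N. f b) / real N" by auto
  then have "(\<Sum>a<N. f a) < (\<Sum>a<N. (\<Sum>b<N. f b) / real N)"
    using assms by (intro sum_strict_mono) auto
  then show False using assms by simp
qed

lemma geom_bound:
  fixes z :: complex
  assumes "norm z = 1" "z \<noteq> 1"
  shows "norm (\<Sum>a<N. z ^ a) \<le> 2 / norm (1 - z)"
proof -
  have "(\<Sum>a<N. z ^ a) = (z ^ N - 1) / (z - 1)" using assms(2) by (simp add: geometric_sum)
  moreover have "norm (z ^ N - 1) \<le> 2"
    using norm_triangle_ineq4[of "z ^ N" 1] assms(1) by (simp add: norm_power)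
  moreover have "norm (z - 1) = norm (1 - z)" by (simp add: norm_minus_commute)
  ultimately show ?thesis using assms(2)
    by (simp add: norm_divide divide_right_mono)
qed


lemma AVG:
  fixes S :: "'g::{ab_group_add,countable} set" and x :: "'i \<Rightarrow> 'g"
  assumes S: "is_subgroup S"
  shows "finite G \<Longrightarrow> finite I \<Longrightarrow> (\<forall>p\<in>I. x p \<in> S \<or> x p \<in> G) \<Longrightarrow> tau > 0 \<Longrightarrow>
    \<exists>nu\<in>annihilator S. Re (\<Sum>p\<in>{p\<in>I. x p \<in> S}. c p) - tau \<le> Re (\<Sum>p\<in>I. c p * nu (x p))"
proof (induction G arbitrary: I c tau rule: finite_induct)
  case empty
  then have "{p\<in>I. x p \<in> S} = I" by auto
  then show ?case using ann_one empty by (intro bexI[of _ "\<lambda>_. 1"]) auto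
next
  case (insert g G)
  show ?case
  proof (cases "g \<in> S")
    case True
    then have "\<forall>p\<in>I. x p \<in> S \<or> x p \<in> G" using insert.prems by auto
    then show ?thesis using insert.IH insert.prems by blast
  next
    case gS: False
    obtain mu where mu: "mu \<in> annihilator S" "mu g \<noteq> 1" using separate[OF S gS] by blast
    have muc: "is_character mu" and mu1: "\<And>s. s \<in> S \<Longrightarrow> mu s = 1" using mu(1) unfolding annihilator_def by auto
    define Ig where "Ig = {p\<in>I. x p = g}"
    define I' where "I' = {p\<in>I. x p \<noteq> g}"
    define C where "C = (\<Sum>p\<in>Ig. norm (c p))"
    define K where "K = 2 * C / norm (1 - mu g)"
    have C0: "C \<ge> 0" unfolding C_def by (simp add: sum_nonneg)
    have nz: "norm (1 - mu g) > 0" using mu(2) by simp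
    have K0: "K \<ge> 0" unfolding K_def using C0 nz by simp
    define N where "N = nat \<lceil>2 * K / tau\<rceil> + 1"
    have N0: "N > 0" unfolding N_def by simp
    have "2 * K / tau \<le> real N" unfolding N_def by linarith
    then have KN: "K / real N \<le> tau / 2" using insert.prems(3) N0 by (simp add: field_simps)
    define c' where "c' p = c p * (\<Sum>a<N. mu (x p) ^ a) / of_nat N" for p
    have fI: "finite I'" "finite Ig" using insert.prems(1) unfolding I'_def Ig_def by auto
    have "\<forall>p\<in>I'. x p \<in> S \<or> x p \<in> G" using insert.prems(2) unfolding I'_def by auto
    then obtain nu' where nu': "nu' \<in> annihilator S"
      "Re (\<Sum>p\<in>{p\<in>I'. x p \<in> S}. c' p) - tau / 2 \<le> Re (\<Sum>p\<in>I'. c' p * nu' (x p))"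
      using insert.IH[OF fI(1), of "tau/2" c'] insert.prems(3) by auto
    have setS: "{p\<in>I'. x p \<in> S} = {p\<in>I. x p \<in> S}" unfolding I'_def using gS by auto
    have "c' p = c p" if "x p \<in> S" for p
      unfolding c'_def using mu1[OF that] N0 by simp
    then have sumS: "(\<Sum>p\<in>{p\<in>I'. x p \<in> S}. c' p) = (\<Sum>p\<in>{p\<in>I. x p \<in> S}. c p)"
      unfolding setS by (intro sum.cong) auto
    define f where "f a = Re (\<Sum>p\<in>I. c p * (nu' (x p) * mu (x p) ^ a))" for a
    have Iu: "I = I' \<union> Ig" "I' \<inter> Ig = {}" unfolding I'_def Ig_def by auto
    have s1: "(\<Sum>a<N. f a) = Re (\<Sum>p\<in>I. c p * nu' (x p) * (\<Sum>a<N. mu (x p) ^ a))"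
    proof -
      have "(\<Sum>a<N. f a) = Re (\<Sum>a<N. \<Sum>p\<in>I. c p * (nu' (x p) * mu (x p) ^ a))"
        unfolding f_def by (simp add: Re_sum)
      also have "\<dots> = Re (\<Sum>p\<in>I. \<Sum>a<N. c p * (nu' (x p) * mu (x p) ^ a))"
        by (subst sum.swap) (rule refl)
      also have "\<dots> = Re (\<Sum>p\<in>I. c p * nu' (x p) * (\<Sum>a<N. mu (x p) ^ a))"
        by (simp only: sum_distrib_left mult.assoc)
      finally show ?thesis .
    qed
    have "(\<Sum>a<N. f a) / real N = Re (\<Sum>p\<in>I. c p * nu' (x p) * (\<Sum>a<N. mu (x p) ^ a) / of_nat N)"
      unfolding s1 by (simp only: Re_divide_of_nat flip: sum_divide_distrib)
    also have "\<dots> = Re (\<Sum>p\<in>I'. c p * nu' (x p) * (\<Sum>a<N. mu (x p) ^ a) / of_nat N)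
        + Re (\<Sum>p\<in>Ig. c p * nu' (x p) * (\<Sum>a<N. mu (x p) ^ a) / of_nat N)"
      by (subst Iu(1), subst sum.union_disjoint) (use fI Iu in auto)
    also have "(\<Sum>p\<in>I'. c p * nu' (x p) * (\<Sum>a<N. mu (x p) ^ a) / of_nat N) = (\<Sum>p\<in>I'. c' p * nu' (x p))"
      unfolding c'_def by (intro sum.cong refl) (simp add: field_simps)
    also have "(\<Sum>p\<in>Ig. c p * nu' (x p) * (\<Sum>a<N. mu (x p) ^ a) / of_nat N) =
        (\<Sum>p\<in>Ig. c p * nu' g * (\<Sum>a<N. mu g ^ a) / of_nat N)"
      by (intro sum.cong refl) (simp add: Ig_def)
    finally have eq: "(\<Sum>a<N. f a) / real N = Re (\<Sum>p\<in>I'. c' p * nu' (x p)) +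
       Re (\<Sum>p\<in>Ig. c p * nu' g * (\<Sum>a<N. mu g ^ a) / of_nat N)" .
    have nug: "norm (nu' g) = 1" using nu'(1) unfolding annihilator_def is_character_def by blast
    have gb: "norm (\<Sum>a<N. mu g ^ a) \<le> 2 / norm (1 - mu g)"
      using geom_bound[OF char_norm[OF muc] mu(2)] .
    have "norm (\<Sum>p\<in>Ig. c p * nu' g * (\<Sum>a<N. mu g ^ a) / of_nat N)
        \<le> (\<Sum>p\<in>Ig. norm (c p) * (2 / norm (1 - mu g)) / real N)"
    proof (rule order_trans[OF norm_sum], rule sum_mono)
      fix p assume "p \<in> Ig"
      have "norm (c p * nu' g * (\<Sum>a<N. mu g ^ a) / of_nat N) = norm (c p) * norm (\<Sum>a<N. mu g ^ a) / real N"
        using nug by (simp add: norm_mult norm_divide)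
      also have "\<dots> \<le> norm (c p) * (2 / norm (1 - mu g)) / real N"
        using gb N0 by (intro divide_right_mono mult_left_mono) auto
      finally show "norm (c p * nu' g * (\<Sum>a<N. mu g ^ a) / of_nat N) \<le> norm (c p) * (2 / norm (1 - mu g)) / real N" .
    qed
    also have "\<dots> = (\<Sum>p\<in>Ig. norm (c p)) * (2 / norm (1 - mu g) / real N)"
      by (simp only: sum_distrib_right) (intro sum.cong refl, simp)
    also have "\<dots> = K / real N" unfolding K_def C_def by simp
    finally have "norm (\<Sum>p\<in>Ig. c p * nu' g * (\<Sum>a<N. mu g ^ a) / of_nat N) \<le> tau / 2" using KN by linarith
    then have "- (tau / 2) \<le> Re (\<Sum>p\<in>Ig. c p * nu' g * (\<Sum>a<N. mu g ^ a) / of_nat N)"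
      using abs_Re_le_cmod[of "\<Sum>p\<in>Ig. c p * nu' g * (\<Sum>a<N. mu g ^ a) / of_nat N"] by linarith
    then have avg: "Re (\<Sum>p\<in>{p\<in>I. x p \<in> S}. c p) - tau \<le> (\<Sum>a<N. f a) / real N"
      using eq nu'(2) arg_cong[OF sumS, of Re] by linarith
    obtain a where "a < N" "(\<Sum>b<N. f b) / real N \<le> f a" using avg_exists[OF N0] by blast
    then have "Re (\<Sum>p\<in>{p\<in>I. x p \<in> S}. c p) - tau \<le> Re (\<Sum>p\<in>I. c p * (\<lambda>y. nu' y * mu y ^ a) (x p))"
      using avg unfolding f_def by simp
    moreover have "(\<lambda>y. nu' y * mu y ^ a) \<in> annihilator S" using ann_prod_pow[OF nu'(1) mu(1)] .
    ultimately show ?thesis by (intro bexI[where x="\<lambda>y. nu' y * mu y ^ a"]) auto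
  qed
qed


definition gm :: "nat \<Rightarrow> (nat \<Rightarrow> 'g::ab_group_add) \<Rightarrow> (nat \<Rightarrow> nat) \<Rightarrow> 'g" where
  "gm k gam m = (\<Sum>i<k. mul (m i) (gam i))"

definition dd :: "nat \<Rightarrow> nat \<Rightarrow> (nat \<Rightarrow> nat) \<Rightarrow> real" where
  "dd k s m = (\<Prod>i<k. real (s choose m i) / 2 ^ s)"

lemma binom_half:
  fixes w :: complex
  shows "((1 + w) / 2) ^ s = (\<Sum>j\<le>s. of_real (real (s choose j) / 2 ^ s) * w ^ j)"
proof -
  have "(w + 1) ^ s = (\<Sum>j\<le>s. of_nat (s choose j) * w ^ j)"
    by (simp add: binomial_ring)
  then have "((1 + w) / 2) ^ s = (\<Sum>j\<le>s. of_nat (s choose j) * w ^ j) / 2 ^ s"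
    by (simp add: power_divide add.commute)
  also have "\<dots> = (\<Sum>j\<le>s. of_real (real (s choose j) / 2 ^ s) * w ^ j)"
    by (simp add: sum_divide_distrib)
  finally show ?thesis .
qed

lemma Qexp:
  assumes xi: "is_character xi"
  shows "(\<Prod>i<k. ((1 + xi (gam i)) / 2) ^ s) =
    (\<Sum>m\<in>PiE {..<k} (\<lambda>_. {..s}). of_real (dd k s m) * xi (gm k gam m))"
proof -
  have "(\<Prod>i<k. ((1 + xi (gam i)) / 2) ^ s) =
        (\<Prod>i<k. \<Sum>j\<le>s. of_real (real (s choose j) / 2 ^ s) * xi (gam i) ^ j)"
    by (simp add: binom_half)
  also have "\<dots> = (\<Sum>m\<in>PiE {..<k} (\<lambda>_. {..s}). \<Prod>i<k. of_real (real (s choose m i) / 2 ^ s) * xi (gam i) ^ m i)"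
    by (rule prod_sum_PiE) auto
  also have "\<dots> = (\<Sum>m\<in>PiE {..<k} (\<lambda>_. {..s}). of_real (dd k s m) * xi (gm k gam m))"
  proof (rule sum.cong[OF refl])
    fix m
    have "(\<Prod>i<k. of_real (real (s choose m i) / 2 ^ s) * xi (gam i) ^ m i) =
          (\<Prod>i<k. (of_real (real (s choose m i) / 2 ^ s) :: complex)) * (\<Prod>i<k. xi (gam i) ^ m i)"
      by (rule prod.distrib)
    also have "(\<Prod>i<k. (of_real (real (s choose m i) / 2 ^ s) :: complex)) = of_real (dd k s m)"
      unfolding dd_def by (simp only: of_real_prod)
    also have "(\<Prod>i<k. xi (gam i) ^ m i) = xi (gm k gam m)"
      unfolding gm_def using xi by (simp add: char_sum char_mul)
    finally show "(\<Prod>i<k. of_real (real (s choose m i) / 2 ^ s) * xi (gam i) ^ m i) = of_real (dd k s m) * xi (gm k gam m)" .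
  qed
  finally show ?thesis .
qed

lemma Pexp:
  fixes k s :: nat and gam :: "nat \<Rightarrow> 'g::ab_group_add"
  assumes xi: "is_character xi"
  defines "M \<equiv> PiE {..<k} (\<lambda>_. {..s})"
  shows "complex_of_real (norm (\<Prod>i<k. ((1 + xi (gam i)) / 2) ^ s) ^ 2) =
    (\<Sum>p\<in>M \<times> M. of_real (dd k s (fst p) * dd k s (snd p)) * xi (gm k gam (fst p) - gm k gam (snd p)))"
proof -
  let ?Q = "\<Prod>i<k. ((1 + xi (gam i)) / 2) ^ s"
  have "complex_of_real (norm ?Q ^ 2) = ?Q * cnj ?Q" by (rule complex_norm_square)
  also have "\<dots> = (\<Sum>m\<in>M. of_real (dd k s m) * xi (gm k gam m)) * (\<Sum>m\<in>M. of_real (dd k s m) * cnj (xi (gm k gam m)))"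
    unfolding Qexp[OF xi] M_def by (simp add: cnj_sum)
  also have "\<dots> = (\<Sum>m\<in>M. \<Sum>m'\<in>M. of_real (dd k s m) * xi (gm k gam m) * (of_real (dd k s m') * cnj (xi (gm k gam m'))))"
    by (rule sum_product)
  also have "\<dots> = (\<Sum>p\<in>M \<times> M. of_real (dd k s (fst p)) * xi (gm k gam (fst p)) * (of_real (dd k s (snd p)) * cnj (xi (gm k gam (snd p)))))"
    by (subst sum.cartesian_product) (simp add: case_prod_beta)
  also have "\<dots> = (\<Sum>p\<in>M \<times> M. of_real (dd k s (fst p) * dd k s (snd p)) * xi (gm k gam (fst p) - gm k gam (snd p)))"
    by (intro sum.cong refl) (simp add: char_diff[OF xi])
  finally show ?thesis .
qed

lemma aux_lin: "(X::real) + Y + (Z + Y) = 2 * (1 + (R + Y)) \<Longrightarrow> R + Y = 1 \<Longrightarrow> (X + Y) / 4 = 1 - (Z + Y) / 4"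
  by (simp add: field_simps)

lemma half_norm:
  fixes z :: complex
  assumes "norm z = 1"
  shows "norm ((1 + z) / 2) ^ 2 = 1 - norm (1 - z) ^ 2 / 4" and "norm ((1 + z) / 2) \<le> 1"
proof -
  have r: "Re z ^ 2 + Im z ^ 2 = 1" using assms cmod_power2[of z] by simp
  have A: "norm ((1 + z) / 2) ^ 2 = ((1 + Re z) ^ 2 + Im z ^ 2) / 4"
    by (simp add: norm_divide power_divide cmod_power2)
  have B: "norm (1 - z) ^ 2 = (1 - Re z) ^ 2 + Im z ^ 2" by (simp add: cmod_power2)
  have C: "(1 + Re z) ^ 2 + Im z ^ 2 + ((1 - Re z) ^ 2 + Im z ^ 2) = 2 * (1 + (Re z ^ 2 + Im z ^ 2))"
    by (simp add: power2_eq_square algebra_simps)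
  show "norm ((1 + z) / 2) ^ 2 = 1 - norm (1 - z) ^ 2 / 4" unfolding A B using aux_lin[OF C r] .
  have "norm (1 + z) \<le> 2" using norm_triangle_ineq[of 1 z] assms by simp
  then show "norm ((1 + z) / 2) \<le> 1" by (simp add: norm_divide)
qed




lemma prod_le_factor:
  fixes f :: "nat \<Rightarrow> real"
  assumes "finite A" "i \<in> A" "\<And>j. j \<in> A \<Longrightarrow> 0 \<le> f j \<and> f j \<le> 1"
  shows "(\<Prod>j\<in>A. f j) \<le> f i"
proof -
  have "(\<Prod>j\<in>A. f j) = f i * (\<Prod>j\<in>A - {i}. f j)" using assms by (simp add: prod.remove)
  moreover have "(\<Prod>j\<in>A - {i}. f j) \<le> 1" using assms by (intro prod_le_1) auto
  moreover have "0 \<le> f i" using assms by auto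
  ultimately show ?thesis by (simp add: mult_left_le)
qed

lemma FL:
  fixes S :: "'g::{ab_group_add,countable} set" and gam :: "nat \<Rightarrow> 'g" and t :: "'g \<Rightarrow> complex"
  assumes S: "is_subgroup S" and t: "is_character t" and epos: "eps > 0"
    and sbig: "2 * real (Suc s) ^ k * (1 - eps ^ 2 / 4) ^ s < 1"
    and hyp: "\<And>m m'. m \<in> PiE {..<k} (\<lambda>_. {..s}) \<Longrightarrow> m' \<in> PiE {..<k} (\<lambda>_. {..s}) \<Longrightarrow>
       gm k gam m - gm k gam m' \<in> S \<Longrightarrow> 0 \<le> Re (t (gm k gam m - gm k gam m'))"
  shows "\<exists>nu\<in>annihilator S. \<forall>i<k. norm (nu (gam i) - t (gam i)) < eps"
proof -
  define M where "M = PiE {..<k} (\<lambda>_. {..s})"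
  define x where "x p = gm k gam (fst p) - gm k gam (snd p)" for p :: "(nat \<Rightarrow> nat) \<times> (nat \<Rightarrow> nat)"
  define c where "c p = complex_of_real (dd k s (fst p) * dd k s (snd p)) * cnj (t (x p))" for p
  define c0 where "c0 = (\<Sum>m\<in>M. dd k s m ^ 2)"
  have finM: "finite M" unfolding M_def by (simp add: finite_PiE)
  have dd0: "dd k s m \<ge> 0" for m unfolding dd_def by (simp add: prod_nonneg)
  have "complex_of_real (\<Sum>m\<in>M. dd k s m) = (\<Sum>m\<in>M. of_real (dd k s m) * (\<lambda>_. 1) (gm k gam m))"
    by simp
  also have "\<dots> = (\<Prod>i<k. ((1 + (\<lambda>_. 1) (gam i)) / 2) ^ s)"
    unfolding M_def by (rule Qexp[OF char_one, symmetric])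
  also have "\<dots> = 1" by simp
  finally have sum1: "(\<Sum>m\<in>M. dd k s m) = 1" using of_real_eq_1_iff by blast
  have cardM: "card M = Suc s ^ k" unfolding M_def by (simp add: card_PiE)
  have "(\<Sum>m\<in>M. dd k s m) ^ 2 \<le> c0 * real (card M)"
    unfolding c0_def by (rule sum_squared_le_sum_of_squares)
  then have c0ge: "1 \<le> c0 * real (Suc s) ^ k" using sum1 cardM by simp
  have posk: "real (Suc s) ^ k > 0" by simp
  have c0pos: "c0 > 0"
  proof (rule ccontr)
    assume "\<not> c0 > 0"
    then have "c0 * real (Suc s) ^ k \<le> 0" using posk by (simp add: mult_nonpos_nonneg)
    then show False using c0ge by linarith
  qed
  have fx: "finite (x ` (M \<times> M))" using finM by simp
  obtain nu where nu: "nu \<in> annihilator S"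
    "Re (\<Sum>p\<in>{p\<in>M \<times> M. x p \<in> S}. c p) - c0 / 2 \<le> Re (\<Sum>p\<in>M \<times> M. c p * nu (x p))"
    using AVG[OF S fx, where I="M \<times> M" and c=c and tau="c0 / 2" and x=x] finM c0pos by auto
  have nuc: "is_character nu" using nu(1) unfolding annihilator_def by blast
  define xi where "xi y = nu y * cnj (t y)" for y
  have xic: "is_character xi" unfolding xi_def by (rule char_prod[OF nuc char_cnj[OF t]])
  define Q where "Q = (\<Prod>i<k. ((1 + xi (gam i)) / 2) ^ s)"
  have "complex_of_real (norm Q ^ 2) = (\<Sum>p\<in>M \<times> M. c p * nu (x p))"
    unfolding Q_def M_def Pexp[OF xic]
    by (intro sum.cong refl) (simp only: c_def xi_def x_def mult.assoc mult.commute mult.left_commute)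
  then have PQ: "Re (\<Sum>p\<in>M \<times> M. c p * nu (x p)) = norm Q ^ 2"
    by (metis Re_complex_of_real)
  have low: "c0 \<le> Re (\<Sum>p\<in>{p\<in>M \<times> M. x p \<in> S}. c p)"
  proof -
    have Rec: "Re (c p) = dd k s (fst p) * dd k s (snd p) * Re (t (x p))" for p
      unfolding c_def by simp
    have D: "(\<lambda>m. (m, m)) ` M \<subseteq> {p\<in>M \<times> M. x p \<in> S}"
      using S unfolding x_def is_subgroup_def by auto
    have nonneg: "\<forall>p\<in>{p\<in>M \<times> M. x p \<in> S} - (\<lambda>m. (m, m)) ` M. 0 \<le> Re (c p)"
    proof
      fix p assume "p \<in> {p\<in>M \<times> M. x p \<in> S} - (\<lambda>m. (m, m)) ` M"
      then have "fst p \<in> M" "snd p \<in> M" "x p \<in> S" by auto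
      then have "0 \<le> Re (t (x p))" using hyp unfolding M_def x_def by blast
      then show "0 \<le> Re (c p)" unfolding Rec using dd0 by simp
    qed
    have "(\<Sum>p\<in>(\<lambda>m. (m, m)) ` M. Re (c p)) = (\<Sum>m\<in>M. Re (c (m, m)))"
      by (subst sum.reindex) (auto simp: inj_on_def)
    also have "\<dots> = c0" unfolding c0_def
      by (intro sum.cong refl) (simp only: Rec x_def fst_conv snd_conv diff_self char_0[OF t] power2_eq_square one_complex.sel mult_1_right)
    finally have "c0 = (\<Sum>p\<in>(\<lambda>m. (m, m)) ` M. Re (c p))" ..
    also have "\<dots> \<le> (\<Sum>p\<in>{p\<in>M \<times> M. x p \<in> S}. Re (c p))"
      by (rule sum_mono2) (use finM D nonneg in auto)
    also have "\<dots> = Re (\<Sum>p\<in>{p\<in>M \<times> M. x p \<in> S}. c p)" by (simp add: Re_sum)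
    finally show ?thesis .
  qed
  have Qlow: "c0 / 2 \<le> norm Q ^ 2" using low nu(2) PQ by linarith
  have "norm (nu (gam i) - t (gam i)) < eps" if i: "i < k" for i
  proof (rule ccontr)
    assume "\<not> ?thesis"
    then have big: "eps \<le> norm (nu (gam i) - t (gam i))" by simp
    define w where "w = xi (gam i)"
    have w1: "norm w = 1" unfolding w_def using char_norm[OF xic] .
    have t1: "norm (t (gam i)) = 1" using char_norm[OF t] .
    have "t (gam i) * cnj (t (gam i)) = 1" using norm1_inverse[OF t1] .
    then have "1 - w = (t (gam i) - nu (gam i)) * cnj (t (gam i))"
      unfolding w_def xi_def by (simp add: algebra_simps)
    then have nw: "norm (1 - w) = norm (nu (gam i) - t (gam i))"
      using t1 by (simp add: norm_mult norm_minus_commute)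
    have "norm Q = (\<Prod>j<k. norm ((1 + xi (gam j)) / 2) ^ s)"
      unfolding Q_def by (simp only: norm_power flip: prod_norm)
    also have "\<dots> \<le> norm ((1 + w) / 2) ^ s"
      unfolding w_def
      by (rule prod_le_factor) (use i half_norm(2)[OF char_norm[OF xic]] in \<open>auto intro: power_le_one\<close>)
    finally have nQ: "norm Q \<le> norm ((1 + w) / 2) ^ s" .
    have "norm Q ^ 2 \<le> (norm ((1 + w) / 2) ^ s) ^ 2"
      using nQ by (intro power_mono) auto
    also have "\<dots> = (norm ((1 + w) / 2) ^ 2) ^ s" by (simp add: power_mult[symmetric] mult.commute)
    also have "\<dots> = (1 - norm (1 - w) ^ 2 / 4) ^ s" using half_norm(1)[OF w1] by simp
    also have "\<dots> \<le> (1 - eps ^ 2 / 4) ^ s"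
    proof (rule power_mono)
      have "0 \<le> norm ((1 + w) / 2) ^ 2" by (rule zero_le_power2)
      then show "0 \<le> 1 - norm (1 - w) ^ 2 / 4" unfolding half_norm(1)[OF w1] .
      have "eps ^ 2 \<le> norm (1 - w) ^ 2"
        using big nw epos by (intro power_mono) auto
      then show "1 - norm (1 - w) ^ 2 / 4 \<le> 1 - eps ^ 2 / 4" by simp
    qed
    finally have "c0 / 2 \<le> (1 - eps ^ 2 / 4) ^ s" using Qlow by linarith
    then have A: "c0 * real (Suc s) ^ k \<le> (2 * (1 - eps ^ 2 / 4) ^ s) * real (Suc s) ^ k"
      using posk by (intro mult_right_mono) auto
    have "(2 * (1 - eps ^ 2 / 4) ^ s) * real (Suc s) ^ k = 2 * real (Suc s) ^ k * (1 - eps ^ 2 / 4) ^ s"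
      by (simp only: ac_simps)
    then have "1 \<le> 2 * real (Suc s) ^ k * (1 - eps ^ 2 / 4) ^ s"
      using A c0ge by linarith
    then show False using sbig by simp
  qed
  then show ?thesis using nu(1) by blast
qed


lemma poly_geom_0:
  fixes q :: real
  assumes q: "0 < q" "q < 1"
  shows "(\<lambda>s. real (Suc s) ^ k * q ^ s) \<longlonglongrightarrow> 0"
proof (cases "k = 0")
  case True
  then show ?thesis using q by (simp add: LIMSEQ_realpow_zero)
next
  case False
  define r where "r = q powr (1 / real k)"
  have r0: "0 < r" unfolding r_def using q by simp
  have r1: "r < 1" unfolding r_def using q False powr_less_mono2[of "1 / real k" q 1] by simp
  have rk: "r ^ k = q"
  proof -
    have "r ^ k = r powr real k" using r0 by (simp add: powr_realpow)
    also have "\<dots> = q" unfolding r_def using q False by (simp add: powr_powr)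
    finally show ?thesis .
  qed
  have "(\<lambda>s. real s * r ^ s) \<longlonglongrightarrow> 0"
    using powser_times_n_limit_0[of r] r0 r1 by simp
  moreover have "(\<lambda>s. r ^ s) \<longlonglongrightarrow> 0" using r0 r1 by (simp add: LIMSEQ_realpow_zero)
  ultimately have "(\<lambda>s. real s * r ^ s + r ^ s) \<longlonglongrightarrow> 0 + 0" by (rule tendsto_add)
  then have "(\<lambda>s. real (Suc s) * r ^ s) \<longlonglongrightarrow> 0" by (simp add: algebra_simps)
  then have "(\<lambda>s. (real (Suc s) * r ^ s) ^ k) \<longlonglongrightarrow> 0 ^ k" by (rule tendsto_power)
  moreover have "(real (Suc s) * r ^ s) ^ k = real (Suc s) ^ k * q ^ s" for s
  proof -
    have "(r ^ s) ^ k = q ^ s" by (metis power_mult mult.commute rk)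
    then show ?thesis by (simp only: power_mult_distrib)
  qed
  moreover have "(0::real) ^ k = 0" using False by simp
  ultimately show ?thesis by simp
qed

lemma s_exists:
  fixes eps :: real
  assumes "0 < eps" "eps \<le> 1"
  shows "\<exists>s. 2 * real (Suc s) ^ k * (1 - eps ^ 2 / 4) ^ s < 1"
proof -
  have e1: "eps ^ 2 \<le> 1" by (rule power_le_one) (use assms in auto)
  have e2: "0 < eps ^ 2" using assms by simp
  have q: "0 < 1 - eps ^ 2 / 4" "1 - eps ^ 2 / 4 < 1" using e1 e2 by linarith+
  have "\<forall>\<^sub>F s in sequentially. real (Suc s) ^ k * (1 - eps ^ 2 / 4) ^ s < 1 / 2"
    by (rule order_tendstoD(2)[OF poly_geom_0[OF q]]) simp
  then obtain N where "\<forall>s\<ge>N. real (Suc s) ^ k * (1 - eps ^ 2 / 4) ^ s < 1 / 2"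
    unfolding eventually_sequentially by blast
  then have "real (Suc N) ^ k * (1 - eps ^ 2 / 4) ^ N < 1 / 2" by blast
  then have "2 * real (Suc N) ^ k * (1 - eps ^ 2 / 4) ^ N < 1" by linarith
  then show ?thesis by blast
qed


lemma diag:
  fixes A :: "nat \<Rightarrow> ('g \<Rightarrow> complex) set" and e :: "nat \<Rightarrow> 'g \<Rightarrow> complex" and g :: "nat \<Rightarrow> 'g"
  assumes ev: "\<And>k. eventually (\<lambda>n. \<exists>nu\<in>A n. \<forall>i<k. norm (nu (g i) - e n (g i)) < 1 / real (Suc k)) sequentially"
    and ne: "\<And>n. A n \<noteq> {}"
  shows "\<exists>nu. (\<forall>n. nu n \<in> A n) \<and> (\<forall>i. (\<lambda>n. norm (nu n (g i) - e n (g i))) \<longlonglongrightarrow> 0)"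
proof -
  define P where "P k n \<longleftrightarrow> (\<exists>nu\<in>A n. \<forall>i<k. norm (nu (g i) - e n (g i)) < 1 / real (Suc k))" for k n
  have P0: "P 0 n" for n using ne unfolding P_def by blast
  define K where "K n = (GREATEST k. k \<le> n \<and> P k n)" for n
  have KP: "K n \<le> n \<and> P (K n) n" for n
    unfolding K_def by (rule GreatestI_nat[of _ 0 n]) (use P0 in auto)
  have Kge: "k \<le> K n" if "k \<le> n" "P k n" for k n
    unfolding K_def by (rule Greatest_le_nat[of _ k n]) (use that in auto)
  define nu where "nu n = (SOME nu. nu \<in> A n \<and> (\<forall>i<K n. norm (nu (g i) - e n (g i)) < 1 / real (Suc (K n))))" for n
  have nu: "nu n \<in> A n \<and> (\<forall>i<K n. norm (nu n (g i) - e n (g i)) < 1 / real (Suc (K n)))" for n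
  proof -
    have ex: "\<exists>nu. nu \<in> A n \<and> (\<forall>i<K n. norm (nu (g i) - e n (g i)) < 1 / real (Suc (K n)))"
      using KP[of n] unfolding P_def by blast
    show ?thesis using someI_ex[OF ex] unfolding nu_def .
  qed
  have "(\<lambda>n. norm (nu n (g i) - e n (g i))) \<longlonglongrightarrow> 0" for i
    unfolding lim_sequentially
  proof (intro allI impI)
    fix r :: real assume r: "r > 0"
    obtain k0 :: nat where k0: "1 / r < real k0" using reals_Archimedean2 by blast
    define k where "k = max k0 (Suc i)"
    have ik: "i < k" unfolding k_def by simp
    have "1 / r < real k" using k0 unfolding k_def by linarith
    then have kr: "1 / real (Suc k) < r" using r by (simp add: field_simps)
    obtain N where N: "\<forall>n\<ge>N. P k n" using ev[of k] unfolding eventually_sequentially P_def by blast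
    show "\<exists>no. \<forall>n\<ge>no. dist (norm (nu n (g i) - e n (g i))) 0 < r"
    proof (intro exI allI impI)
      fix n assume n: "max N k \<le> n"
      then have "k \<le> K n" using Kge N by auto
      then have "norm (nu n (g i) - e n (g i)) < 1 / real (Suc (K n))" using nu ik by auto
      also have "\<dots> \<le> 1 / real (Suc k)" using \<open>k \<le> K n\<close> by (simp add: frac_le)
      finally show "dist (norm (nu n (g i) - e n (g i))) 0 < r" using kr by simp
    qed
  qed
  then show ?thesis using nu by blast
qed

lemma eventual_FL:
  fixes S :: "nat \<Rightarrow> 'g::{ab_group_add,countable} set" and eta :: "nat \<Rightarrow> 'g \<Rightarrow> complex"
    and gam :: "nat \<Rightarrow> 'g"
  assumes S: "\<And>n. is_subgroup (S n)" and eta: "\<And>n. is_character (eta n)"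
    and along: "\<And>y. (\<lambda>n. indicator (S n) y * cmod (eta n y - 1)) \<longlonglongrightarrow> (0::real)"
  shows "eventually (\<lambda>n. \<exists>nu\<in>annihilator (S n). \<forall>i<k. norm (nu (gam i) - eta n (gam i)) < 1 / real (Suc k)) sequentially"
proof -
  define eps where "eps = 1 / real (Suc k)"
  have eps: "0 < eps" "eps \<le> 1" unfolding eps_def by auto
  obtain s where s: "2 * real (Suc s) ^ k * (1 - eps ^ 2 / 4) ^ s < 1" using s_exists[OF eps] by blast
  define M where "M = PiE {..<k} (\<lambda>_::nat. {..s})"
  define X where "X = (\<lambda>p. gm k gam (fst p) - gm k gam (snd p)) ` (M \<times> M)"
  have fX: "finite X" unfolding X_def M_def by (simp add: finite_PiE)
  have "\<forall>y\<in>X. eventually (\<lambda>n. indicator (S n) y * cmod (eta n y - 1) < 1) sequentially"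
    by (intro ballI order_tendstoD(2)[OF along]) simp
  then have "eventually (\<lambda>n. \<forall>y\<in>X. indicator (S n) y * cmod (eta n y - 1) < 1) sequentially"
    by (rule eventually_ball_finite[OF fX])
  then show ?thesis
  proof (rule eventually_mono)
    fix n assume H: "\<forall>y\<in>X. indicator (S n) y * cmod (eta n y - 1) < (1::real)"
    have hyp: "0 \<le> Re (eta n (gm k gam m - gm k gam m'))"
      if "m \<in> M" "m' \<in> M" "gm k gam m - gm k gam m' \<in> S n" for m m'
    proof -
      let ?y = "gm k gam m - gm k gam m'"
      have "?y \<in> X" unfolding X_def using that by force
      then have "cmod (eta n ?y - 1) < 1" using H that(3) by fastforce
      moreover have "\<bar>Re (eta n ?y - 1)\<bar> \<le> cmod (eta n ?y - 1)" by (rule abs_Re_le_cmod)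
      ultimately show ?thesis by simp
    qed
    show "\<exists>nu\<in>annihilator (S n). \<forall>i<k. norm (nu (gam i) - eta n (gam i)) < 1 / real (Suc k)"
      using FL[OF S eta eps(1) s, of gam] hyp unfolding M_def eps_def by blast
  qed
qed


theorem lemma3p10:
  fixes S :: "nat \<Rightarrow> 'g::{ab_group_add, countable} set"
    and chis :: "nat \<Rightarrow> 'g \<Rightarrow> complex"
    and chi :: "'g \<Rightarrow> complex"
  assumes "\<And>n. is_subgroup (S n)"
    and "\<And>n. is_character (chis n)"
    and "is_character chi"
  shows "conv_along S chis chi \<longleftrightarrow>
    (\<exists>\<nu>. (\<forall>n. \<nu> n \<in> annihilator (S n)) \<and>
         (\<forall>\<gamma>. (\<lambda>n. chis n \<gamma> * \<nu> n \<gamma>) \<longlonglongrightarrow> chi \<gamma>))"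
proof
  assume ca: "conv_along S chis chi"
  define eta where "eta n y = chi y * cnj (chis n y)" for n y
  have etac: "is_character (eta n)" for n
    unfolding eta_def using char_prod[OF assms(3) char_cnj[OF assms(2)]] .
  have key: "cmod (eta n y - 1) = cmod (chis n y - chi y)" for n y
  proof -
    have c1: "norm (chis n y) = 1" using char_norm[OF assms(2)] .
    have "chis n y * cnj (chis n y) = 1" using norm1_inverse[OF c1] .
    then have "eta n y - 1 = (chi y - chis n y) * cnj (chis n y)"
      unfolding eta_def by (simp add: algebra_simps)
    then show ?thesis using c1 by (simp add: norm_mult norm_minus_commute)
  qed
  have along: "(\<lambda>n. indicator (S n) y * cmod (eta n y - 1)) \<longlonglongrightarrow> (0::real)" for y
    using ca unfolding conv_along_def key by blast
  have ev: "eventually (\<lambda>n. \<exists>nu\<in>annihilator (S n). \<forall>i<k. norm (nu (from_nat i) - eta n (from_nat i)) < 1 / real (Suc k)) sequentially" for k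
    by (rule eventual_FL[OF assms(1) etac along])
  obtain nu where nu: "\<forall>n. nu n \<in> annihilator (S n)"
    "\<forall>i. (\<lambda>n. norm (nu n (from_nat i) - eta n (from_nat i))) \<longlonglongrightarrow> 0"
    using diag[where A="\<lambda>n. annihilator (S n)" and e=eta and g=from_nat, OF ev] ann_one by blast
  have "(\<lambda>n. chis n y * nu n y) \<longlonglongrightarrow> chi y" for y
  proof -
    have e: "norm (chis n y * nu n y - chi y) = norm (nu n y - eta n y)" for n
    proof -
      have c1: "norm (chis n y) = 1" using char_norm[OF assms(2)] .
      have "chis n y * cnj (chis n y) = 1" using norm1_inverse[OF c1] .
      then have "chis n y * nu n y - chi y = chis n y * (nu n y - eta n y)"
        unfolding eta_def by (simp add: algebra_simps)
      then show ?thesis using c1 by (simp add: norm_mult)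
    qed
    have "(\<lambda>n. norm (nu n y - eta n y)) \<longlonglongrightarrow> 0" using nu(2)[rule_format, of "to_nat y"] by simp
    then have "(\<lambda>n. norm (chis n y * nu n y - chi y)) \<longlonglongrightarrow> 0" unfolding e .
    then show ?thesis by (simp add: tendsto_norm_zero_iff LIM_zero_iff)
  qed
  then show "\<exists>\<nu>. (\<forall>n. \<nu> n \<in> annihilator (S n)) \<and> (\<forall>\<gamma>. (\<lambda>n. chis n \<gamma> * \<nu> n \<gamma>) \<longlonglongrightarrow> chi \<gamma>)"
    using nu(1) by blast
next
  assume "\<exists>\<nu>. (\<forall>n. \<nu> n \<in> annihilator (S n)) \<and> (\<forall>\<gamma>. (\<lambda>n. chis n \<gamma> * \<nu> n \<gamma>) \<longlonglongrightarrow> chi \<gamma>)"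
  then obtain nu where nu: "\<And>n. nu n \<in> annihilator (S n)" "\<And>y. (\<lambda>n. chis n y * nu n y) \<longlonglongrightarrow> chi y"
    by blast
  show "conv_along S chis chi"
    unfolding conv_along_def
  proof
    fix y
    have "(\<lambda>n. chis n y * nu n y - chi y) \<longlonglongrightarrow> 0" using nu(2)[of y] by (simp add: LIM_zero)
    then have lim: "(\<lambda>n. norm (chis n y * nu n y - chi y)) \<longlonglongrightarrow> 0" by (simp add: tendsto_norm_zero)
    have "norm (indicator (S n) y * cmod (chis n y - chi y)) \<le> norm (chis n y * nu n y - chi y)" for n
    proof (cases "y \<in> S n")
      case True
      then have "nu n y = 1" using nu(1)[of n] unfolding annihilator_def by blast
      then show ?thesis using True by simp
    next
      case False then show ?thesis by simp
    qed
    then show "(\<lambda>n. indicator (S n) y * cmod (chis n y - chi y)) \<longlonglongrightarrow> (0::real)"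
      by (intro Lim_null_comparison[OF _ lim]) auto
  qed
qed

end
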